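(* For each $i=1,\dots,d$, every $\mathbf F_i$-supermartingale is also an $\mathbf F^i$-supermartingale.
   Context: $(\Omega,\mathcal F,\mathbb P)$ is complete and $\{\mathcal F(\tilde s)\}_{\tilde s\in\mathbb N_0^d}$ satisfies (F1) $\mathcal F(\tilde s)\subseteq\mathcal F(\tilde r)$ for $\tilde s\le\tilde r$ componentwise; (F2) $\mathcal F(\tilde 0)$ contains all null sets; (F4) for all $\tilde s,\tilde r$, $\mathcal F(\tilde s)$ and $\mathcal F(\tilde r)$ are conditionally independent given $\mathcal F(\tilde s\wedge\tilde r)$ ($\wedge$ componentwise minimum). With $\tilde e_i$ the $i$th unit vector: $\mathcal F_i(t):=\mathcal F(t\tilde e_i)$, $\mathbf F_i=\{\mathcal F_i(t)\}_{t\in\mathbb N_0}$; $\mathcal F^i(t):=\sigma\big(\bigcup_{\tilde r\in\mathbb N_0^d:\,r_i\le t}\mathcal F(\tilde r)\big)$, $\mathbf F^i=\{\mathcal F^i(t)\}_{t\in\mathbb N_0}$. *)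

theory Defs
  imports "HOL-Probability.Probability"
begin

text \<open>Multi-indices in N_0^d are functions 'd \<Rightarrow> nat over a finite index type 'd
(d = CARD('d)); the order and the minimum are the componentwise ones (le_fun, inf).\<close>

definition cond_indep :: "'a measure \<Rightarrow> 'a measure \<Rightarrow> 'a measure \<Rightarrow> 'a measure \<Rightarrow> bool" where
  "cond_indep M G F H \<longleftrightarrow>
     (\<forall>A\<in>sets F. \<forall>B\<in>sets H.
        AE x in M. real_cond_exp M G (indicator (A \<inter> B)) x
                   = real_cond_exp M G (indicator A) x * real_cond_exp M G (indicator B) x)"

text \<open>Conditions (F1), (F2), (F4) on a multiparameter filtration, together with the
standing requirement that each F(r) is a sub-sigma-algebra of M.\<close>
definition multi_filtration :: "'a measure \<Rightarrow> (('d::finite \<Rightarrow> nat) \<Rightarrow> 'a measure) \<Rightarrow> bool" where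
  "multi_filtration M F \<longleftrightarrow>
     (\<forall>r. subalgebra M (F r)) \<and>
     (\<forall>s r. s \<le> r \<longrightarrow> sets (F s) \<subseteq> sets (F r)) \<and>
     null_sets M \<subseteq> sets (F (\<lambda>_. 0)) \<and>
     (\<forall>s r. cond_indep M (F (inf s r)) (F s) (F r))"

definition axis_filt :: "(('d \<Rightarrow> nat) \<Rightarrow> 'a measure) \<Rightarrow> 'd \<Rightarrow> nat \<Rightarrow> 'a measure" where
  "axis_filt F i t = F (\<lambda>j. if j = i then t else 0)"

definition slab_filt :: "'a measure \<Rightarrow> (('d \<Rightarrow> nat) \<Rightarrow> 'a measure) \<Rightarrow> 'd \<Rightarrow> nat \<Rightarrow> 'a measure" where
  "slab_filt M F i t = sigma (space M) (\<Union>r\<in>{r. r i \<le> t}. sets (F r))"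

definition supermartingale :: "'a measure \<Rightarrow> (nat \<Rightarrow> 'a measure) \<Rightarrow> (nat \<Rightarrow> 'a \<Rightarrow> real) \<Rightarrow> bool" where
  "supermartingale M G X \<longleftrightarrow>
     (\<forall>t. X t \<in> borel_measurable (G t)) \<and>
     (\<forall>t. integrable M (X t)) \<and>
     (\<forall>s t. s \<le> t \<longrightarrow> (AE x in M. real_cond_exp M (G s) (X t) x \<le> X s x))"

end

theory Submission
  imports Defs
begin

lemma sfs: assumes "prob_space M" "subalgebra M N" shows "sigma_finite_subalgebra M N"
proof -
  interpret prob_space M by fact
  have "finite_measure_subalgebra M N" by unfold_locales (rule assms(2))
  then show ?thesis by (rule finite_measure_subalgebra_is_sigma_finite)
qed

lemma dynkin_int:
  fixes f g :: "'a \<Rightarrow> real"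
  assumes f: "integrable M f" and g: "integrable M g"
    and st: "Int_stable G" and GP: "G \<subseteq> Pow (space M)"
    and sub: "sigma_sets (space M) G \<subseteq> sets M"
    and eqG: "\<And>A. A \<in> G \<Longrightarrow> (\<integral>x\<in>A. f x \<partial>M) = (\<integral>x\<in>A. g x \<partial>M)"
    and eqO: "(\<integral>x. f x \<partial>M) = (\<integral>x. g x \<partial>M)"
    and A: "A \<in> sigma_sets (space M) G"
  shows "(\<integral>x\<in>A. f x \<partial>M) = (\<integral>x\<in>A. g x \<partial>M)"
  using st GP A
proof (induct rule: sigma_sets_induct_disjoint)
  case (basic A) then show ?case by (rule eqG)
next
  case empty then show ?case by (simp add: set_lebesgue_integral_def)
next
  case (compl A)
  have As: "A \<in> sets M" using compl(1) sub by blast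
  have "\<And>h::'a\<Rightarrow>real. integrable M h \<Longrightarrow> (\<integral>x\<in>space M - A. h x \<partial>M) = (\<integral>x. h x \<partial>M) - (\<integral>x\<in>A. h x \<partial>M)"
  proof -
    fix h :: "'a \<Rightarrow> real" assume h: "integrable M h"
    have "(\<integral>x\<in>space M - A. h x \<partial>M) = (\<integral>x. indicator (space M - A) x * h x \<partial>M)"
      by (simp add: set_lebesgue_integral_def)
    also have "\<dots> = (\<integral>x. h x - indicator A x * h x \<partial>M)"
      by (rule Bochner_Integration.integral_cong) (auto simp: indicator_def)
    also have "\<dots> = (\<integral>x. h x \<partial>M) - (\<integral>x. indicator A x * h x \<partial>M)"
      using h integrable_real_mult_indicator[OF As h] by (simp add: mult.commute)
    finally show "(\<integral>x\<in>space M - A. h x \<partial>M) = (\<integral>x. h x \<partial>M) - (\<integral>x\<in>A. h x \<partial>M)"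
      by (simp add: set_lebesgue_integral_def)
  qed
  then show ?case using f g compl(2) eqO by simp
next
  case (union A)
  have As: "\<And>i. A i \<in> sets M" using union(2) sub by blast
  have d: "\<And>i j. i \<noteq> j \<Longrightarrow> A i \<inter> A j = {}" using union(1) by (simp add: disjoint_family_on_def)
  have U: "(\<Union>i. A i) \<in> sets M" using As by blast
  have "(\<integral>x\<in>(\<Union>i. A i). f x \<partial>M) = (\<Sum>i. (\<integral>x\<in>A i. f x \<partial>M))"
    using lebesgue_integral_countable_add[of A M f] As d integrable_mult_indicator[OF U f] unfolding set_integrable_def by simp
  also have "\<dots> = (\<Sum>i. (\<integral>x\<in>A i. g x \<partial>M))" using union(3) by simp
  also have "\<dots> = (\<integral>x\<in>(\<Union>i. A i). g x \<partial>M)"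
    using lebesgue_integral_countable_add[of A M g] As d integrable_mult_indicator[OF U g] unfolding set_integrable_def by simp
  finally show ?case .
qed

lemma key_indep:
  fixes f :: "'a \<Rightarrow> real"
  assumes P: "prob_space M"
    and sG: "subalgebra M G" and sH: "subalgebra M H" and sR: "subalgebra M R"
    and GH: "subalgebra H G"
    and ci: "cond_indep M G R H"
    and A: "A \<in> sets R"
    and f: "integrable M f" and fH: "f \<in> borel_measurable H"
  shows "(\<integral>x\<in>A. f x \<partial>M) = (\<integral>x\<in>A. real_cond_exp M G f x \<partial>M)"
proof -
  interpret prob_space M by fact
  have sfG: "sigma_finite_subalgebra M G" using sfs[OF P sG] .
  have sfH: "sigma_finite_subalgebra M H" using sfs[OF P sH] .
  have AM: "A \<in> sets M" using A sR by (auto simp: subalgebra_def)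
  let ?eA = "real_cond_exp M G (indicator A)"
  have iA: "integrable M (indicator A :: 'a \<Rightarrow> real)" using AM by (intro integrable_real_indicator) (simp_all add: less_top[symmetric])
  have eAint: "integrable M ?eA" using sigma_finite_subalgebra.real_cond_exp_int(1)[OF sfG iA] .
  have eAG: "?eA \<in> borel_measurable G" using borel_measurable_cond_exp .
  have eAH: "?eA \<in> borel_measurable H" by (rule measurable_from_subalg[OF GH eAG])
  have eAM: "?eA \<in> borel_measurable M" by (rule measurable_from_subalg[OF sG eAG])
  have fM: "f \<in> borel_measurable M" by (rule measurable_from_subalg[OF sH fH])
  have stepa: "AE x in M. real_cond_exp M H (indicator A) x = ?eA x"
  proof (rule sigma_finite_subalgebra.real_cond_exp_charact[OF sfH _ iA eAint eAH])
    fix B assume B: "B \<in> sets H"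
    have BM: "B \<in> sets M" using B sH by (auto simp: subalgebra_def)
    have iB: "integrable M (indicator B :: 'a \<Rightarrow> real)" using BM by (intro integrable_real_indicator) (simp_all add: less_top[symmetric])
    have iAB: "integrable M (indicator (A \<inter> B) :: 'a \<Rightarrow> real)" using BM AM by (intro integrable_real_indicator) (auto simp add: less_top[symmetric])
    have "(\<integral>x\<in>B. indicator A x \<partial>M) = (\<integral>x. indicator (A \<inter> B) x \<partial>M)"
      unfolding set_lebesgue_integral_def by (rule Bochner_Integration.integral_cong) (auto simp: indicator_def)
    also have "\<dots> = (\<integral>x. real_cond_exp M G (indicator (A \<inter> B)) x \<partial>M)"
      using sigma_finite_subalgebra.real_cond_exp_int(2)[OF sfG iAB] by simp
    also have "\<dots> = (\<integral>x. ?eA x * real_cond_exp M G (indicator B) x \<partial>M)"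
      using ci A B unfolding cond_indep_def by (intro integral_cong_AE) auto
    also have "\<dots> = (\<integral>x. ?eA x * indicator B x \<partial>M)"
      by (rule sigma_finite_subalgebra.real_cond_exp_intg(2)[OF sfG])
         (use integrable_real_mult_indicator[OF BM eAint] eAG BM in \<open>auto simp: mult.commute\<close>)
    also have "\<dots> = (\<integral>x\<in>B. ?eA x \<partial>M)"
      by (simp add: set_lebesgue_integral_def mult.commute)
    finally show "(\<integral>x\<in>B. indicator A x \<partial>M) = (\<integral>x\<in>B. ?eA x \<partial>M)" .
  qed
  have ifA: "integrable M (\<lambda>x. f x * indicator A x)"
    using integrable_real_mult_indicator[OF AM f] by (simp add: mult.commute)
  have h1: "integrable M (\<lambda>x. f x * real_cond_exp M H (indicator A) x)"
       "(\<integral>x. f x * real_cond_exp M H (indicator A) x \<partial>M) = (\<integral>x. f x * indicator A x \<partial>M)"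
    using sigma_finite_subalgebra.real_cond_exp_intg[OF sfH ifA fH] AM by auto
  have ae2: "AE x in M. f x * real_cond_exp M H (indicator A) x = ?eA x * f x"
    using stepa by auto
  have i2: "integrable M (\<lambda>x. ?eA x * f x)"
    using integrable_cong_AE[OF _ _ ae2] h1(1) eAM fM by auto
  have h3: "(\<integral>x. ?eA x * real_cond_exp M G f x \<partial>M) = (\<integral>x. ?eA x * f x \<partial>M)"
    using sigma_finite_subalgebra.real_cond_exp_intg(2)[OF sfG i2 eAG fM] .
  have ef: "integrable M (real_cond_exp M G f)" using sigma_finite_subalgebra.real_cond_exp_int(1)[OF sfG f] .
  have efG: "real_cond_exp M G f \<in> borel_measurable G" using borel_measurable_cond_exp .
  have i4: "integrable M (\<lambda>x. real_cond_exp M G f x * indicator A x)"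
    using integrable_real_mult_indicator[OF AM ef] by (simp add: mult.commute)
  have h4: "(\<integral>x. real_cond_exp M G f x * ?eA x \<partial>M) = (\<integral>x. real_cond_exp M G f x * indicator A x \<partial>M)"
    using sigma_finite_subalgebra.real_cond_exp_intg(2)[OF sfG i4 efG] AM by simp
  have "(\<integral>x\<in>A. f x \<partial>M) = (\<integral>x. f x * indicator A x \<partial>M)"
    by (simp add: set_lebesgue_integral_def mult.commute)
  also have "\<dots> = (\<integral>x. f x * real_cond_exp M H (indicator A) x \<partial>M)" using h1(2) by simp
  also have "\<dots> = (\<integral>x. ?eA x * f x \<partial>M)" using ae2 fM by (intro integral_cong_AE) (auto intro!: borel_measurable_times borel_measurable_cond_exp2)
  also have "\<dots> = (\<integral>x. ?eA x * real_cond_exp M G f x \<partial>M)" using h3 by simp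
  also have "\<dots> = (\<integral>x. real_cond_exp M G f x * indicator A x \<partial>M)" using h4 by (simp add: mult.commute)
  also have "\<dots> = (\<integral>x\<in>A. real_cond_exp M G f x \<partial>M)"
    by (simp add: set_lebesgue_integral_def mult.commute)
  finally show ?thesis .
qed


theorem proposition6p4:
  fixes M :: "'a measure" and F :: "('d::finite \<Rightarrow> nat) \<Rightarrow> 'a measure"
  assumes "prob_space M"
    and "complete_measure M"
    and "multi_filtration M F"
  shows "\<forall>i X. supermartingale M (axis_filt F i) X \<longrightarrow> supermartingale M (slab_filt M F i) X"
proof (intro allI impI)
  fix i :: 'd and X :: "nat \<Rightarrow> 'a \<Rightarrow> real"
  assume sm: "supermartingale M (axis_filt F i) X"
  have P: "prob_space M" by fact
  interpret prob_space M by fact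
  have sub: "\<And>r. subalgebra M (F r)" and mono: "\<And>s r. s \<le> r \<Longrightarrow> sets (F s) \<subseteq> sets (F r)"
    and ci: "\<And>s r. cond_indep M (F (inf s r)) (F s) (F r)"
    using assms(3) unfolding multi_filtration_def by auto
  have spF: "\<And>r. space (F r) = space M" using sub by (simp add: subalgebra_def)
  have setsF: "\<And>r. sets (F r) \<subseteq> sets M" using sub by (simp add: subalgebra_def)
  define e where "e t = (\<lambda>j. if j = i then t else (0::nat))" for t
  have ax: "\<And>t. axis_filt F i t = F (e t)" by (simp add: axis_filt_def e_def)
  define U where "U t = (\<Union>r\<in>{r. r i \<le> t}. sets (F r))" for t
  have UM: "\<And>t. U t \<subseteq> sets M" using setsF unfolding U_def by blast
  have UP: "\<And>t. U t \<subseteq> Pow (space M)" using UM sets.sets_into_space by blast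
  have slab_sets: "\<And>t. sets (slab_filt M F i t) = sigma_sets (space M) (U t)"
    unfolding slab_filt_def U_def[symmetric] using UP by (rule sets_measure_of)
  have slab_space: "\<And>t. space (slab_filt M F i t) = space M"
    unfolding slab_filt_def by (simp add: space_measure_of_conv)
  have sub_slab: "\<And>t. subalgebra M (slab_filt M F i t)"
    unfolding subalgebra_def using slab_sets slab_space sets.sigma_sets_subset[OF UM] by auto
  have eU: "\<And>t. sets (F (e t)) \<subseteq> U t"
  proof -
    fix t have "e t \<in> {r. r i \<le> t}" unfolding e_def by simp
    then show "sets (F (e t)) \<subseteq> U t" unfolding U_def by blast
  qed
  have axsub: "\<And>t. subalgebra (slab_filt M F i t) (axis_filt F i t)"
    unfolding subalgebra_def ax slab_sets slab_space spF using eU sigma_sets.Basic by blast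
  have smX: "\<And>t. X t \<in> borel_measurable (F (e t))" and smI: "\<And>t. integrable M (X t)"
    and smS: "\<And>s t. s \<le> t \<Longrightarrow> AE x in M. real_cond_exp M (F (e s)) (X t) x \<le> X s x"
    using sm unfolding supermartingale_def ax by auto
  show "supermartingale M (slab_filt M F i) X"
    unfolding supermartingale_def
  proof (intro conjI allI impI)
    fix t show "X t \<in> borel_measurable (slab_filt M F i t)"
      using measurable_from_subalg[OF axsub] smX ax by metis
  next
    fix t show "integrable M (X t)" by (rule smI)
  next
    fix s t :: nat assume st: "s \<le> t"
    let ?G = "F (e s)"
    have sfG: "sigma_finite_subalgebra M ?G" using sfs[OF P sub] .
    have eGi: "integrable M (real_cond_exp M ?G (X t))"
      using sigma_finite_subalgebra.real_cond_exp_int(1)[OF sfG smI] .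
    have eq: "AE x in M. real_cond_exp M (slab_filt M F i s) (X t) x = real_cond_exp M ?G (X t) x"
    proof (rule sigma_finite_subalgebra.real_cond_exp_charact[OF sfs[OF P sub_slab] _ smI eGi])
      show "real_cond_exp M ?G (X t) \<in> borel_measurable (slab_filt M F i s)"
        using measurable_from_subalg[OF axsub[of s]] borel_measurable_cond_exp ax by metis
    next
      fix A assume A: "A \<in> sets (slab_filt M F i s)"
      show "(\<integral>x\<in>A. X t x \<partial>M) = (\<integral>x\<in>A. real_cond_exp M ?G (X t) x \<partial>M)"
      proof (rule dynkin_int[OF smI eGi _ UP _ _ _ A[unfolded slab_sets]])
        show "Int_stable (U s)"
          unfolding Int_stable_def
        proof (intro ballI)
          fix a b assume "a \<in> U s" "b \<in> U s"
          then obtain r1 r2 where r: "r1 i \<le> s" "a \<in> sets (F r1)" "r2 i \<le> s" "b \<in> sets (F r2)"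
            unfolding U_def by auto
          have "a \<in> sets (F (sup r1 r2))" "b \<in> sets (F (sup r1 r2))"
            using r mono[of r1 "sup r1 r2"] mono[of r2 "sup r1 r2"] by auto
          then have "a \<inter> b \<in> sets (F (sup r1 r2))" by auto
          moreover have "(sup r1 r2) i \<le> s" using r by simp
          ultimately show "a \<inter> b \<in> U s" unfolding U_def by blast
        qed
      next
        show "sigma_sets (space M) (U s) \<subseteq> sets M" using sets.sigma_sets_subset[OF UM] .
      next
        show "(\<integral>x. X t x \<partial>M) = (\<integral>x. real_cond_exp M ?G (X t) x \<partial>M)"
          using sigma_finite_subalgebra.real_cond_exp_int(2)[OF sfG smI] by simp
      next
        fix B assume "B \<in> U s"
        then obtain r where r: "r i \<le> s" "B \<in> sets (F r)" unfolding U_def by auto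
        define r' where "r' = r(i := s)"
        have "r \<le> r'" using r unfolding r'_def le_fun_def by auto
        then have B: "B \<in> sets (F r')" using mono r by blast
        have inf: "inf r' (e t) = e s" using st unfolding r'_def e_def inf_fun_def by (auto simp: fun_eq_iff inf_nat_def)
        have "e s \<le> e t" using st unfolding e_def le_fun_def by auto
        then have GH: "subalgebra (F (e t)) (F (e s))" using mono spF unfolding subalgebra_def by auto
        show "(\<integral>x\<in>B. X t x \<partial>M) = (\<integral>x\<in>B. real_cond_exp M ?G (X t) x \<partial>M)"
          by (rule key_indep[OF P sub sub sub GH _ B smI smX]) (use ci[of r' "e t"] inf in simp)
      qed
    qed
    show "AE x in M. real_cond_exp M (slab_filt M F i s) (X t) x \<le> X s x"
      using eq smS[OF st] by auto
  qed
qed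

end
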